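(* Let $d_0,d_1,d_2\in\mathbb{C}$ and put $\alpha_0=1-2d_0+d_1+d_2$, $\alpha_1=1+d_0-2d_1+d_2$, $\alpha_2=1+d_0+d_1-2d_2$. Let $\tau_0,\tau_1,\tau_2$ be functions of one variable and $G_i(t_1,t_2)=(2t_2)^{d_i/2}\,\tau_i\big(t_1/\sqrt{2t_2}\big)$ ($i=0,1,2$). Then the system $$\Big(D_x^2-xD_x-\frac{\alpha_i-\alpha_{i+1}}{3}\Big)\tau_i\cdot\tau_{i+1}=0\quad(i=0,1,2)$$ is equivalent to the system $(D_{t_1}^2+D_{t_2})\,G_i\cdot G_{i+1}=0$ ($i=0,1,2$).
   Context: Indices mod 3. Hirota operators: $P(D)\,F\cdot G=P(\partial_y)(F(t+y)G(t-y))|_{y=0}$ in the respective variables, e.g. $D_xF\cdot G=F'G-FG'$, $D_x^2F\cdot G=F''G-2F'G'+FG''$. *)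

theory Defs
  imports "HOL-Analysis.Analysis"
begin

definition dv :: "(real \<Rightarrow> complex) \<Rightarrow> real \<Rightarrow> complex" where
  "dv F x = vector_derivative F (at x)"

definition hirota1 :: "(real \<Rightarrow> complex) \<Rightarrow> (real \<Rightarrow> complex) \<Rightarrow> real \<Rightarrow> complex" where
  "hirota1 F G x = dv F x * G x - F x * dv G x"

definition hirota2 :: "(real \<Rightarrow> complex) \<Rightarrow> (real \<Rightarrow> complex) \<Rightarrow> real \<Rightarrow> complex" where
  "hirota2 F G x = dv (dv F) x * G x - 2 * dv F x * dv G x + F x * dv (dv G) x"

definition alpha :: "(nat \<Rightarrow> complex) \<Rightarrow> nat \<Rightarrow> complex" where
  "alpha d i = 1 + d 0 + d 1 + d 2 - 3 * d i"

definition Gfun :: "(nat \<Rightarrow> complex) \<Rightarrow> (nat \<Rightarrow> real \<Rightarrow> complex) \<Rightarrow> nat \<Rightarrow> real \<Rightarrow> real \<Rightarrow> complex" where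
  "Gfun d \<tau> i t1 t2 = (complex_of_real (2 * t2)) powr (d i / 2) * \<tau> i (t1 / sqrt (2 * t2))"

end

theory Submission imports Defs begin

lemma dv_scale:
  fixes f :: "real \<Rightarrow> complex"
  assumes "\<And>x. f differentiable (at x)" and "k \<noteq> 0"
  shows "dv (\<lambda>s. C * f (s / k)) = (\<lambda>x. C * (of_real (1/k) * dv f (x/k)))"
proof
  fix x
  have h1: "((\<lambda>s. s / k) has_vector_derivative (1/k)) (at x)"
    unfolding has_real_derivative_iff_has_vector_derivative[symmetric]
    using assms(2) by (auto intro!: derivative_eq_intros)
  have h2: "(f has_vector_derivative dv f (x/k)) (at ((\<lambda>s. s / k) x))"
    unfolding dv_def using assms(1) vector_derivative_works by auto
  have "((f \<circ> (\<lambda>s. s / k)) has_vector_derivative ((1/k) *\<^sub>R dv f (x/k))) (at x)"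
    by (rule vector_diff_chain_at[OF h1 h2])
  then have "((\<lambda>s. C * f (s / k)) has_vector_derivative (C * ((1/k) *\<^sub>R dv f (x/k)))) (at x)"
    using has_vector_derivative_mult_right[of "f \<circ> (\<lambda>s. s / k)" _ _ C] by (simp only: o_def)
  then show "dv (\<lambda>s. C * f (s / k)) x = C * (of_real (1/k) * dv f (x/k))"
    unfolding dv_def by (simp add: vector_derivative_at scaleR_conv_of_real)
qed

lemma Gfun_eq:
  assumes "t > 0"
  shows "Gfun d \<tau> i t1 t = exp (d i / 2 * Ln (2 * of_real t)) * \<tau> i (t1 / sqrt (2 * t))"
  using assms unfolding Gfun_def powr_def by simp

lemma Gfun_t2:
  fixes f :: "real \<Rightarrow> complex"
  assumes "f differentiable (at (t1 / sqrt (2 * t)))" and t: "t > 0"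
  shows "((\<lambda>s. exp (a / 2 * Ln (2 * of_real s)) * f (t1 / sqrt (2 * s))) has_vector_derivative
     (exp (a / 2 * Ln (2 * of_real t)) / of_real (2*t) *
        (a * f (t1 / sqrt (2 * t)) - of_real (t1 / sqrt (2 * t)) * dv f (t1 / sqrt (2 * t))))) (at t)"
proof -
  let ?u = "t1 / sqrt (2 * t)"
  have g: "((\<lambda>z. exp (a / 2 * Ln (2 * z))) has_field_derivative
       (exp (a / 2 * Ln (2 * of_real t)) * (a / 2 * (inverse (2 * of_real t) * 2)))) (at (of_real t))"
  proof -
    have e: "(2::complex) * of_real t = of_real (2*t)" by simp
    have "(2::complex) * of_real t \<notin> \<real>\<^sub>\<le>\<^sub>0" using t by (simp add: complex_nonpos_Reals_iff)
    then have l: "(Ln has_field_derivative inverse (2 * of_real t)) (at (2 * of_real t))"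
      by (rule has_field_derivative_Ln)
    have m: "((\<lambda>z::complex. 2 * z) has_field_derivative 2) (at (of_real t))"
      using DERIV_cmult[OF DERIV_ident, of 2 "of_real t" UNIV] by simp
    have c: "((\<lambda>z. a / 2 * Ln (2 * z)) has_field_derivative (a / 2 * (inverse (2 * of_real t) * 2))) (at (of_real t))"
      by (rule DERIV_cmult[OF DERIV_chain2[OF l m]])
    have x: "((\<lambda>z. exp (a / 2 * Ln (2 * z))) has_field_derivative
       (exp (a / 2 * Ln (2 * of_real t)) * (a / 2 * (inverse (2 * of_real t) * 2)))) (at (of_real t))"
      by (rule DERIV_chain2[OF DERIV_exp c])
    show ?thesis by (rule x)
  qed
  have g': "((\<lambda>s. exp (a / 2 * Ln (2 * of_real s))) has_vector_derivative
       (exp (a / 2 * Ln (2 * of_real t)) * (a / 2 * (inverse (2 * of_real t) * 2)))) (at t)"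
    by (rule has_vector_derivative_real_field[OF g])
  have h1: "((\<lambda>s. t1 / sqrt (2 * s)) has_vector_derivative (- ?u / (2 * t))) (at t)"
    unfolding has_real_derivative_iff_has_vector_derivative[symmetric]
    using t
    by (auto intro!: derivative_eq_intros simp: field_simps power2_eq_square real_sqrt_mult) 
  have h2: "(f has_vector_derivative dv f ?u) (at ((\<lambda>s. t1 / sqrt (2 * s)) t))"
    unfolding dv_def using assms(1) vector_derivative_works by auto
  have h3: "((f \<circ> (\<lambda>s. t1 / sqrt (2 * s))) has_vector_derivative ((- ?u / (2 * t)) *\<^sub>R dv f ?u)) (at t)"
    by (rule vector_diff_chain_at[OF h1 h2])
  have "((\<lambda>s. exp (a / 2 * Ln (2 * of_real s)) * f (t1 / sqrt (2 * s))) has_vector_derivative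
     (exp (a / 2 * Ln (2 * of_real t)) * ((- ?u / (2 * t)) *\<^sub>R dv f ?u) +
      (exp (a / 2 * Ln (2 * of_real t)) * (a / 2 * (inverse (2 * of_real t) * 2))) * f ?u)) (at t)"
    using has_vector_derivative_mult[OF g' h3] by (simp add: o_def)
  moreover have "exp (a / 2 * Ln (2 * of_real t)) * ((- ?u / (2 * t)) *\<^sub>R dv f ?u) +
      (exp (a / 2 * Ln (2 * of_real t)) * (a / 2 * (inverse (2 * of_real t) * 2))) * f ?u
     = exp (a / 2 * Ln (2 * of_real t)) / of_real (2*t) *
        (a * f ?u - of_real ?u * dv f ?u)"
    using t by (simp add: scaleR_conv_of_real field_simps)
  ultimately show ?thesis by simp
qed

definition PP :: "(nat \<Rightarrow> complex) \<Rightarrow> nat \<Rightarrow> real \<Rightarrow> complex" where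
  "PP d i t = exp (d i / 2 * Ln (2 * of_real t))"

lemma dv_Gfun_t1:
  assumes t: "t2 > 0" and d1: "\<And>x. \<tau> i differentiable (at x)" and d2: "\<And>x. dv (\<tau> i) differentiable (at x)"
  shows "dv (\<lambda>s. Gfun d \<tau> i s t2) = (\<lambda>x. PP d i t2 * (of_real (1/sqrt (2*t2)) * dv (\<tau> i) (x/sqrt (2*t2))))"
    and "dv (\<lambda>x. PP d i t2 * (of_real (1/sqrt (2*t2)) * dv (\<tau> i) (x/sqrt (2*t2)))) = (\<lambda>x. (PP d i t2 * of_real (1/sqrt (2*t2))) * (of_real (1/sqrt (2*t2)) * dv (dv (\<tau> i)) (x/sqrt (2*t2))))"
proof -
  have k: "sqrt (2*t2) \<noteq> 0" using t by simp
  have e: "(\<lambda>s. Gfun d \<tau> i s t2) = (\<lambda>s. PP d i t2 * \<tau> i (s / sqrt (2*t2)))"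
    using Gfun_eq[OF t] unfolding PP_def by auto
  show 1: "dv (\<lambda>s. Gfun d \<tau> i s t2) = (\<lambda>x. PP d i t2 * (of_real (1/sqrt (2*t2)) * dv (\<tau> i) (x/sqrt (2*t2))))"
    unfolding e by (rule dv_scale[OF d1 k])
  have "(\<lambda>x. PP d i t2 * (of_real (1/sqrt (2*t2)) * dv (\<tau> i) (x/sqrt (2*t2))))
     = (\<lambda>x. (PP d i t2 * of_real (1/sqrt (2*t2))) * dv (\<tau> i) (x/sqrt (2*t2)))"
    by (simp add: mult.assoc)
  then show "dv (\<lambda>x. PP d i t2 * (of_real (1/sqrt (2*t2)) * dv (\<tau> i) (x/sqrt (2*t2)))) = (\<lambda>x. (PP d i t2 * of_real (1/sqrt (2*t2))) * (of_real (1/sqrt (2*t2)) * dv (dv (\<tau> i)) (x/sqrt (2*t2))))"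
    by (simp only: dv_scale[OF d2 k])
qed

lemma dv_Gfun_t2:
  assumes t: "t2 > 0" and d1: "\<And>x. \<tau> i differentiable (at x)"
  shows "dv (\<lambda>s. Gfun d \<tau> i t1 s) t2 = PP d i t2 / of_real (2*t2) *
        (d i * \<tau> i (t1 / sqrt (2 * t2)) - of_real (t1 / sqrt (2 * t2)) * dv (\<tau> i) (t1 / sqrt (2 * t2)))"
proof -
  have "((\<lambda>s. Gfun d \<tau> i t1 s) has_vector_derivative (PP d i t2 / of_real (2*t2) *
        (d i * \<tau> i (t1 / sqrt (2 * t2)) - of_real (t1 / sqrt (2 * t2)) * dv (\<tau> i) (t1 / sqrt (2 * t2))))) (at t2)"
  proof (rule has_vector_derivative_transform_within_open[where S="{0<..}"])
    show "((\<lambda>s. exp (d i / 2 * Ln (2 * of_real s)) * \<tau> i (t1 / sqrt (2 * s))) has_vector_derivative (PP d i t2 / of_real (2*t2) *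
        (d i * \<tau> i (t1 / sqrt (2 * t2)) - of_real (t1 / sqrt (2 * t2)) * dv (\<tau> i) (t1 / sqrt (2 * t2))))) (at t2)"
      unfolding PP_def by (rule Gfun_t2[OF d1 t])
  qed (use t Gfun_eq in auto)
  then show ?thesis unfolding dv_def by (rule vector_derivative_at)
qed

lemma alg:
  fixes P Q c T a b A A1 A2 B B1 B2 U :: complex
  assumes "c*c = 1/T" "T \<noteq> 0"
  shows "(P*c)*(c*A2) * (Q*B) - 2*(P*(c*A1))*(Q*(c*B1)) + (P*A)*((Q*c)*(c*B2))
     + ((P/T*(a*A - U*A1)) * (Q*B) - (P*A)*(Q/T*(b*B - U*B1)))
   = P*Q/T * ((A2*B - 2*A1*B1 + A*B2) - U*(A1*B - A*B1) - (b - a) * (A*B))"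
proof -
  have "(P*c)*(c*A2) * (Q*B) - 2*(P*(c*A1))*(Q*(c*B1)) + (P*A)*((Q*c)*(c*B2))
      = P*Q*(c*c) * (A2*B - 2*A1*B1 + A*B2)" by (simp add: algebra_simps)
  also have "\<dots> = P*Q/T * (A2*B - 2*A1*B1 + A*B2)" using assms by simp
  finally have 1: "(P*c)*(c*A2) * (Q*B) - 2*(P*(c*A1))*(Q*(c*B1)) + (P*A)*((Q*c)*(c*B2))
      = P*Q/T * (A2*B - 2*A1*B1 + A*B2)" .
  have 2: "(P/T*(a*A - U*A1)) * (Q*B) - (P*A)*(Q/T*(b*B - U*B1)) = P*Q/T * (- U*(A1*B - A*B1) - (b - a) * (A*B))"
    by (simp add: algebra_simps)
  show ?thesis unfolding 1 using 2 by (simp add: algebra_simps)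
qed

lemma key:
  assumes t: "t2 > 0" and d1: "\<And>x. \<tau> i differentiable (at x)" and d2: "\<And>x. dv (\<tau> i) differentiable (at x)"
    and d1': "\<And>x. \<tau> j differentiable (at x)" and d2': "\<And>x. dv (\<tau> j) differentiable (at x)"
  shows "hirota2 (\<lambda>s. Gfun d \<tau> i s t2) (\<lambda>s. Gfun d \<tau> j s t2) t1
            + hirota1 (\<lambda>s. Gfun d \<tau> i t1 s) (\<lambda>s. Gfun d \<tau> j t1 s) t2
       = PP d i t2 * PP d j t2 / of_real (2*t2) *
         (hirota2 (\<tau> i) (\<tau> j) (t1 / sqrt (2 * t2))
            - complex_of_real (t1 / sqrt (2 * t2)) * hirota1 (\<tau> i) (\<tau> j) (t1 / sqrt (2 * t2))
            - (alpha d i - alpha d j) / 3 * (\<tau> i (t1 / sqrt (2 * t2)) * \<tau> j (t1 / sqrt (2 * t2))))"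
proof -
  have k2: "of_real (1/sqrt (2*t2)) * of_real (1/sqrt (2*t2)) = (1 / of_real (2*t2) :: complex)"
    using t by (simp flip: of_real_mult)
  have gi: "Gfun d \<tau> i t1 t2 = PP d i t2 * \<tau> i (t1 / sqrt (2 * t2))"
   and gj: "Gfun d \<tau> j t1 t2 = PP d j t2 * \<tau> j (t1 / sqrt (2 * t2))"
    using Gfun_eq[OF t] unfolding PP_def by auto
  have t0: "complex_of_real (2*t2) \<noteq> 0" using t by simp
  have al: "(alpha d i - alpha d j) / 3 = d j - d i" unfolding alpha_def by simp
  show ?thesis
    unfolding hirota2_def hirota1_def 
      dv_Gfun_t1(1)[where i=i and \<tau>=\<tau> and d=d, OF t d1 d2] dv_Gfun_t1(1)[where i=j and \<tau>=\<tau> and d=d, OF t d1' d2']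
      dv_Gfun_t1(2)[where i=i and \<tau>=\<tau> and d=d, OF t d1 d2] dv_Gfun_t1(2)[where i=j and \<tau>=\<tau> and d=d, OF t d1' d2']
      dv_Gfun_t2[where i=i and \<tau>=\<tau> and d=d, OF t d1] dv_Gfun_t2[where i=j and \<tau>=\<tau> and d=d, OF t d1'] gi gj al
    by (rule alg[OF k2 t0])
qed

theorem proposition5p2:
  fixes d :: "nat \<Rightarrow> complex" and \<tau> :: "nat \<Rightarrow> real \<Rightarrow> complex"
  assumes diff1: "\<And>i x. i < 3 \<Longrightarrow> \<tau> i differentiable (at x)"
      and diff2: "\<And>i x. i < 3 \<Longrightarrow> dv (\<tau> i) differentiable (at x)"
  shows "(\<forall>i<3. \<forall>x::real.
            hirota2 (\<tau> i) (\<tau> ((i + 1) mod 3)) x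
            - complex_of_real x * hirota1 (\<tau> i) (\<tau> ((i + 1) mod 3)) x
            - (alpha d i - alpha d ((i + 1) mod 3)) / 3 * (\<tau> i x * \<tau> ((i + 1) mod 3) x) = 0)
     \<longleftrightarrow>
         (\<forall>i<3. \<forall>t1 t2::real. t2 > 0 \<longrightarrow>
            hirota2 (\<lambda>s. Gfun d \<tau> i s t2) (\<lambda>s. Gfun d \<tau> ((i + 1) mod 3) s t2) t1
            + hirota1 (\<lambda>s. Gfun d \<tau> i t1 s) (\<lambda>s. Gfun d \<tau> ((i + 1) mod 3) t1 s) t2 = 0)"
proof -
  have K: "hirota2 (\<lambda>s. Gfun d \<tau> i s q) (\<lambda>s. Gfun d \<tau> ((i + 1) mod 3) s q) p
            + hirota1 (\<lambda>s. Gfun d \<tau> i p s) (\<lambda>s. Gfun d \<tau> ((i + 1) mod 3) p s) q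
       = PP d i q * PP d ((i + 1) mod 3) q / of_real (2*q) *
         (hirota2 (\<tau> i) (\<tau> ((i + 1) mod 3)) (p / sqrt (2 * q))
            - complex_of_real (p / sqrt (2 * q)) * hirota1 (\<tau> i) (\<tau> ((i + 1) mod 3)) (p / sqrt (2 * q))
            - (alpha d i - alpha d ((i + 1) mod 3)) / 3 * (\<tau> i (p / sqrt (2 * q)) * \<tau> ((i + 1) mod 3) (p / sqrt (2 * q))))"
    if "i < 3" "q > 0" for i p q
    by (rule key) (use that diff1 diff2 in auto)
  have nz: "PP d i t2 * PP d j t2 / of_real (2*t2) \<noteq> 0" if "t2 > 0" for i j t2
    using that unfolding PP_def by simp
  show ?thesis
  proof
    assume H: "\<forall>i<3. \<forall>x::real.
            hirota2 (\<tau> i) (\<tau> ((i + 1) mod 3)) x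
            - complex_of_real x * hirota1 (\<tau> i) (\<tau> ((i + 1) mod 3)) x
            - (alpha d i - alpha d ((i + 1) mod 3)) / 3 * (\<tau> i x * \<tau> ((i + 1) mod 3) x) = 0"
    show "\<forall>i<3. \<forall>t1 t2::real. t2 > 0 \<longrightarrow>
            hirota2 (\<lambda>s. Gfun d \<tau> i s t2) (\<lambda>s. Gfun d \<tau> ((i + 1) mod 3) s t2) t1
            + hirota1 (\<lambda>s. Gfun d \<tau> i t1 s) (\<lambda>s. Gfun d \<tau> ((i + 1) mod 3) t1 s) t2 = 0"
    proof (intro allI impI)
      fix i t1 t2 assume i: "(i::nat) < 3" and t: "(t2::real) > 0"
      show "hirota2 (\<lambda>s. Gfun d \<tau> i s t2) (\<lambda>s. Gfun d \<tau> ((i + 1) mod 3) s t2) t1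
            + hirota1 (\<lambda>s. Gfun d \<tau> i t1 s) (\<lambda>s. Gfun d \<tau> ((i + 1) mod 3) t1 s) t2 = 0"
        unfolding K[OF i t] H[rule_format, OF i] by (rule mult_zero_right)
    qed
  next
    assume H: "\<forall>i<3. \<forall>t1 t2::real. t2 > 0 \<longrightarrow>
            hirota2 (\<lambda>s. Gfun d \<tau> i s t2) (\<lambda>s. Gfun d \<tau> ((i + 1) mod 3) s t2) t1
            + hirota1 (\<lambda>s. Gfun d \<tau> i t1 s) (\<lambda>s. Gfun d \<tau> ((i + 1) mod 3) t1 s) t2 = 0"
    show "\<forall>i<3. \<forall>x::real.
            hirota2 (\<tau> i) (\<tau> ((i + 1) mod 3)) x
            - complex_of_real x * hirota1 (\<tau> i) (\<tau> ((i + 1) mod 3)) x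
            - (alpha d i - alpha d ((i + 1) mod 3)) / 3 * (\<tau> i x * \<tau> ((i + 1) mod 3) x) = 0"
    proof (intro allI impI)
      fix i x assume i: "(i::nat) < 3"
      have h: "(1::real) / 2 > 0" by simp
      have "PP d i (1/2) * PP d ((i + 1) mod 3) (1/2) / of_real (2*(1/2)) *
         (hirota2 (\<tau> i) (\<tau> ((i + 1) mod 3)) (x / sqrt (2 * (1/2)))
            - complex_of_real (x / sqrt (2 * (1/2))) * hirota1 (\<tau> i) (\<tau> ((i + 1) mod 3)) (x / sqrt (2 * (1/2)))
            - (alpha d i - alpha d ((i + 1) mod 3)) / 3 * (\<tau> i (x / sqrt (2 * (1/2))) * \<tau> ((i + 1) mod 3) (x / sqrt (2 * (1/2))))) = 0"
        unfolding K[where p=x, OF i h, symmetric] by (rule H[rule_format, OF i h])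
      then show "hirota2 (\<tau> i) (\<tau> ((i + 1) mod 3)) x
            - complex_of_real x * hirota1 (\<tau> i) (\<tau> ((i + 1) mod 3)) x
            - (alpha d i - alpha d ((i + 1) mod 3)) / 3 * (\<tau> i x * \<tau> ((i + 1) mod 3) x) = 0"
        using nz[OF h, of i "(i + 1) mod 3"] by simp
    qed
  qed
qed

end
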